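(* For every subclass $\mathbf{X}$ of the class $\mathbf{M}$ of all metric spaces, the following are equivalent: (i) $\mathbf{X}\subseteq\mathbf{Dis}$, there exists $(Y,\rho)\in\mathbf{X}$ with $\operatorname{card}(Y)\geqslant 2$, and $\mathbf{Dis}_{X_1}\subseteq\mathbf{X}$ for every $(X_1,d_1)\in\mathbf{X}$; (ii) $\mathbf{P}_{\mathbf{X}}=\mathbf{Am}$.
   Context: All metric spaces are assumed to have nonempty underlying sets; $\mathbf{M}$ is the class of all metric spaces. A metric $d$ on $X$ is discrete if there is $k\in(0,\infty)$ with $d(x,y)=k$ for all distinct $x,y\in X$; $\mathbf{Dis}$ is the class of all metric spaces with discrete metric, and for a nonempty set $X_1$, $\mathbf{Dis}_{X_1}$ is the class of all metric spaces $(X_1,d)$ with $d$ a discrete metric on $X_1$. $\mathbf{F}$ is the set of all functions $f:[0,\infty)\to[0,\infty)$; $f\in\mathbf{F}$ is amenable if $f^{-1}(0)=\{0\}$, and $\mathbf{Am}$ is the set of all amenable $f\in\mathbf{F}$. For a class $\mathbf{X}$ of metric spaces, $\mathbf{P}_{\mathbf{X}}$ denotes the set of all $f\in\mathbf{F}$ such that for every metric space $(X,d)$, if $(X,d)\in\mathbf{X}$ then $(X,f\circ d)\in\mathbf{X}$ (where $f\circ d(x,y)=f(d(x,y))$; membership requires $f\circ d$ to be a metric). *)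

theory Defs
  imports Main "HOL-Library.Extended_Real" Complex_Main
begin

text \<open>To make spaces with the same carrier and same metric equal,
 d is required to be extensional: it is 0 outside X \<times> X.\<close>

definition metric_on :: "'a set \<Rightarrow> ('a \<Rightarrow> 'a \<Rightarrow> real) \<Rightarrow> bool" where
  "metric_on X d \<longleftrightarrow> X \<noteq> {}
     \<and> (\<forall>x y. (x \<notin> X \<or> y \<notin> X) \<longrightarrow> d x y = 0)
     \<and> (\<forall>x\<in>X. \<forall>y\<in>X. 0 \<le> d x y \<and> (d x y = 0 \<longleftrightarrow> x = y) \<and> d x y = d y x)
     \<and> (\<forall>x\<in>X. \<forall>y\<in>X. \<forall>z\<in>X. d x z \<le> d x y + d y z)"

definition MS :: "('a set \<times> ('a \<Rightarrow> 'a \<Rightarrow> real)) set" where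
  "MS = {(X, d). metric_on X d}"

definition Dis :: "('a set \<times> ('a \<Rightarrow> 'a \<Rightarrow> real)) set" where
  "Dis = {(X, d). metric_on X d \<and> (\<exists>k>0. \<forall>x\<in>X. \<forall>y\<in>X. x \<noteq> y \<longrightarrow> d x y = k)}"

definition Dis_on :: "'a set \<Rightarrow> ('a set \<times> ('a \<Rightarrow> 'a \<Rightarrow> real)) set" where
  "Dis_on X1 = {(X, d) \<in> Dis. X = X1}"

text \<open>Functions [0,\<infinity>) \<rightarrow> [0,\<infinity>), represented as real functions that vanish on negatives.\<close>
definition FF :: "(real \<Rightarrow> real) set" where
  "FF = {f. (\<forall>t. t < 0 \<longrightarrow> f t = 0) \<and> (\<forall>t\<ge>0. f t \<ge> 0)}"

definition Am :: "(real \<Rightarrow> real) set" where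
  "Am = {f \<in> FF. \<forall>t\<ge>0. f t = 0 \<longleftrightarrow> t = 0}"

definition P_cls :: "('a set \<times> ('a \<Rightarrow> 'a \<Rightarrow> real)) set \<Rightarrow> (real \<Rightarrow> real) set" where
  "P_cls C = {f \<in> FF. \<forall>X d. (X, d) \<in> C \<longrightarrow> (X, (\<lambda>x y. f (d x y))) \<in> C}"

end

theory Submission
  imports Defs
begin

definition discm :: "'a set \<Rightarrow> real \<Rightarrow> 'a \<Rightarrow> 'a \<Rightarrow> real" where
  "discm Y t = (\<lambda>x y. if x \<in> Y \<and> y \<in> Y \<and> x \<noteq> y then t else 0)"

lemma discm_metric:
  assumes "Y \<noteq> {}" "t > 0"
  shows "metric_on Y (discm Y t)"
  unfolding metric_on_def
proof (intro conjI allI ballI impI)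
  fix x y z assume "x \<in> Y" "y \<in> Y" "z \<in> Y"
  then show "discm Y t x z \<le> discm Y t x y + discm Y t y z"
    using assms unfolding discm_def by (cases "x = y"; cases "y = z"; cases "x = z") simp_all
qed (use assms in \<open>auto simp: discm_def\<close>)

lemma discm_Dis_on:
  assumes "Y \<noteq> {}" "t > 0"
  shows "(Y, discm Y t) \<in> Dis_on Y"
  using discm_metric[OF assms] assms(2) unfolding Dis_on_def Dis_def
  by (auto simp: discm_def)

lemma Dis_triv:
  assumes "(X, d) \<in> Dis" "f \<in> Am"
  shows "(X, \<lambda>x y. f (d x y)) \<in> Dis_on X"
proof -
  from assms(1) have m: "metric_on X d" and "\<exists>k>0. \<forall>x\<in>X. \<forall>y\<in>X. x \<noteq> y \<longrightarrow> d x y = k"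
    unfolding Dis_def by auto
  then obtain k where k: "k > 0" "\<forall>x\<in>X. \<forall>y\<in>X. x \<noteq> y \<longrightarrow> d x y = k" by blast
  have f0: "f 0 = 0" and fk: "f k > 0" and fnn: "\<forall>t\<ge>0. f t \<ge> 0"
    using assms(2) k(1) unfolding Am_def FF_def by (auto simp: order_le_less)
  have eq: "\<And>x y. f (d x y) = (if x \<in> X \<and> y \<in> X \<and> x \<noteq> y then f k else 0)"
  proof -
    fix x y
    show "f (d x y) = (if x \<in> X \<and> y \<in> X \<and> x \<noteq> y then f k else 0)"
    proof (cases "x \<in> X \<and> y \<in> X \<and> x \<noteq> y")
      case True then show ?thesis using k by auto
    next
      case False
      then have "d x y = 0" using m unfolding metric_on_def by auto
      then show ?thesis using False f0 by auto
    qed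
  qed
  have e: "(\<lambda>x y. f (d x y)) = discm X (f k)"
    unfolding discm_def by (intro ext) (simp only: eq)
  have ne: "X \<noteq> {}" using m unfolding metric_on_def by auto
  show ?thesis unfolding e by (rule discm_Dis_on[OF ne fk])
qed

lemma star_discrete:
  assumes m: "metric_on X d"
    and star: "\<forall>x\<in>X. \<forall>y\<in>X. \<forall>z\<in>X. x \<noteq> y \<longrightarrow> x \<noteq> z \<longrightarrow> d x y = d x z"
  shows "(X, d) \<in> Dis"
proof (cases "\<exists>a\<in>X. \<exists>b\<in>X. a \<noteq> b")
  case True
  then obtain a b where ab: "a \<in> X" "b \<in> X" "a \<noteq> b" by blast
  have m3: "\<forall>x\<in>X. \<forall>y\<in>X. 0 \<le> d x y \<and> (d x y = 0 \<longleftrightarrow> x = y) \<and> d x y = d y x"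
    using m unfolding metric_on_def by blast
  have "0 \<le> d a b" "d a b \<noteq> 0" using m3 ab by simp_all
  then have kpos: "d a b > 0" by simp
  have all: "\<forall>x\<in>X. \<forall>y\<in>X. x \<noteq> y \<longrightarrow> d x y = d a b"
  proof (intro ballI impI)
    fix x y assume xy: "x \<in> X" "y \<in> X" "x \<noteq> y"
    show "d x y = d a b"
    proof (cases "x = a")
      case True then show ?thesis using star[rule_format, of a y b] xy ab by simp
    next
      case False
      have "d x y = d x a" using star[rule_format, of x y a] xy ab False by simp
      also have "\<dots> = d a x" using m3 xy ab by simp
      also have "\<dots> = d a b" using star[rule_format, of a x b] xy ab False by simp
      finally show ?thesis .
    qed
  qed
  have "\<exists>k>0. \<forall>x\<in>X. \<forall>y\<in>X. x \<noteq> y \<longrightarrow> d x y = k"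
    using kpos all by blast
  then show ?thesis using m unfolding Dis_def by blast
next
  case False
  then have "\<forall>x\<in>X. \<forall>y\<in>X. x \<noteq> y \<longrightarrow> d x y = 1" by blast
  then have "\<exists>k>0. \<forall>x\<in>X. \<forall>y\<in>X. x \<noteq> y \<longrightarrow> d x y = k"
    by (intro exI[of _ 1]) simp
  then show ?thesis using m unfolding Dis_def by blast
qed

lemma mo_refl: "metric_on X d \<Longrightarrow> x \<in> X \<Longrightarrow> d x x = 0"
  unfolding metric_on_def by blast
lemma mo_pos: "metric_on X d \<Longrightarrow> x \<in> X \<Longrightarrow> y \<in> X \<Longrightarrow> x \<noteq> y \<Longrightarrow> d x y > 0"
  unfolding metric_on_def by (metis order_le_less)
lemma mo_ne: "metric_on X d \<Longrightarrow> x \<in> X \<Longrightarrow> y \<in> X \<Longrightarrow> x \<noteq> y \<Longrightarrow> d x y \<noteq> 0"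
  using mo_pos by fastforce
lemma mo_out: "metric_on X d \<Longrightarrow> \<not> (x \<in> X \<and> y \<in> X) \<Longrightarrow> d x y = 0"
  unfolding metric_on_def by blast
lemma mo_sym: "metric_on X d \<Longrightarrow> x \<in> X \<Longrightarrow> y \<in> X \<Longrightarrow> d x y = d y x"
  unfolding metric_on_def by blast
lemma mo_tri: "metric_on X d \<Longrightarrow> x \<in> X \<Longrightarrow> y \<in> X \<Longrightarrow> z \<in> X \<Longrightarrow> d x z \<le> d x y + d y z"
  unfolding metric_on_def by blast
lemma mo_nonempty: "metric_on X d \<Longrightarrow> X \<noteq> {}"
  unfolding metric_on_def by blast

theorem mainTheorem4:
  fixes C :: "('a set \<times> ('a \<Rightarrow> 'a \<Rightarrow> real)) set"
  assumes "C \<subseteq> MS"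
  shows "(C \<subseteq> Dis \<and> (\<exists>Y \<rho>. (Y, \<rho>) \<in> C \<and> (\<exists>a\<in>Y. \<exists>b\<in>Y. a \<noteq> b))
           \<and> (\<forall>X1 d1. (X1, d1) \<in> C \<longrightarrow> Dis_on X1 \<subseteq> C))
         \<longleftrightarrow> P_cls C = Am"
proof
  assume H: "C \<subseteq> Dis \<and> (\<exists>Y \<rho>. (Y, \<rho>) \<in> C \<and> (\<exists>a\<in>Y. \<exists>b\<in>Y. a \<noteq> b))
           \<and> (\<forall>X1 d1. (X1, d1) \<in> C \<longrightarrow> Dis_on X1 \<subseteq> C)"
  then obtain Y \<rho> a b where Y: "(Y, \<rho>) \<in> C" "a \<in> Y" "b \<in> Y" "a \<noteq> b" by blast
  show "P_cls C = Am"
  proof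
    show "Am \<subseteq> P_cls C"
    proof
      fix f assume f: "f \<in> Am"
      have "(X, \<lambda>x y. f (d x y)) \<in> C" if "(X, d) \<in> C" for X d
        using Dis_triv[OF _ f, of X d] H that by blast
      then show "f \<in> P_cls C" using f unfolding P_cls_def Am_def by auto
    qed
  next
    show "P_cls C \<subseteq> Am"
    proof
      fix f assume f: "f \<in> P_cls C"
      then have fF: "f \<in> FF" and pres: "\<And>X d. (X, d) \<in> C \<Longrightarrow> (X, \<lambda>x y. f (d x y)) \<in> C"
        unfolding P_cls_def by auto
      have mY: "metric_on Y \<rho>" using Y assms unfolding MS_def by auto
      have "metric_on Y (\<lambda>x y. f (\<rho> x y))" using pres[OF Y(1)] assms unfolding MS_def by auto
      then have "f (\<rho> a a) = 0" using Y mo_refl by fastforce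
      then have f0: "f 0 = 0" using mY Y mo_refl by fastforce
      have "f t \<noteq> 0" if t: "t > 0" for t
      proof -
        have "(Y, discm Y t) \<in> C" using discm_Dis_on[OF _ t, of Y] Y H by blast
        then have "(Y, \<lambda>x y. f (discm Y t x y)) \<in> C" by (rule pres)
        then have "metric_on Y (\<lambda>x y. f (discm Y t x y))" using assms unfolding MS_def by auto
        then have "f (discm Y t a b) \<noteq> 0" using Y mo_ne by fastforce
        then show ?thesis using Y unfolding discm_def by auto
      qed
      then show "f \<in> Am" using fF f0 unfolding Am_def by (auto simp: order_le_less)
    qed
  qed
next
  assume P: "P_cls C = Am"
  have AmP: "\<And>f X d. f \<in> Am \<Longrightarrow> (X, d) \<in> C \<Longrightarrow> (X, \<lambda>x y. f (d x y)) \<in> C"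
    using P unfolding P_cls_def by auto
  have sub: "C \<subseteq> Dis"
  proof
    fix p assume p: "p \<in> C"
    obtain X d where pd: "p = (X, d)" by (cases p)
    have m: "metric_on X d" using p pd assms unfolding MS_def by auto
    have "\<forall>x\<in>X. \<forall>y\<in>X. \<forall>z\<in>X. x \<noteq> y \<longrightarrow> x \<noteq> z \<longrightarrow> d x y = d x z"
    proof (rule ccontr)
      assume "\<not> ?thesis"
      then obtain x y z where xyz: "x \<in> X" "y \<in> X" "z \<in> X" "x \<noteq> y" "x \<noteq> z" "d x y \<noteq> d x z"
        by blast
      then have yz: "y \<noteq> z" by auto
      define v where "v = (if d y z = d x y then d x z else d x y)"
      define f :: "real \<Rightarrow> real" where "f t = (if t \<le> 0 then 0 else if t = v then 3 else 1)" for t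
      have fA: "f \<in> Am" unfolding Am_def FF_def f_def by auto
      have "metric_on X (\<lambda>a b. f (d a b))"
        using AmP[OF fA, of X d] p pd assms unfolding MS_def by auto
      note tri = mo_tri[OF this]
      have pos: "d x y > 0" "d x z > 0" "d y z > 0" "d z y = d y z"
        using mo_pos[OF m] mo_sym[OF m] xyz yz by auto
      show False
      proof (cases "d y z = d x y")
        case True
        have vv: "v = d x z" using True unfolding v_def by simp
        have "f (d x z) \<le> f (d x y) + f (d y z)" using tri[of x y z] xyz by simp
        moreover have "f (d x z) = 3" using pos(2) vv unfolding f_def by simp
        moreover have "f (d x y) = 1" using pos(1) vv xyz(6) unfolding f_def by simp
        moreover have "f (d y z) = 1" using pos(1) True vv xyz(6) unfolding f_def by simp
        ultimately show False by simp
      next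
        case False
        have vv: "v = d x y" using False unfolding v_def by simp
        have "f (d x y) \<le> f (d x z) + f (d z y)" using tri[of x z y] xyz by simp
        moreover have "f (d x y) = 3" using pos(1) vv unfolding f_def by simp
        moreover have "f (d x z) = 1" using pos(2) vv xyz(6) unfolding f_def by simp
        moreover have "f (d z y) = 1" using pos(3,4) False vv unfolding f_def by simp
        ultimately show False by simp
      qed
    qed
    then show "p \<in> Dis" unfolding pd by (rule star_discrete[OF m])
  qed
  have ex: "\<exists>Y \<rho>. (Y, \<rho>) \<in> C \<and> (\<exists>a\<in>Y. \<exists>b\<in>Y. a \<noteq> b)"
  proof (rule ccontr)
    assume N: "\<not> ?thesis"
    define f :: "real \<Rightarrow> real" where "f t = 0" for t
    have "f \<in> P_cls C"
    proof -
      have "(X, \<lambda>x y. f (d x y)) \<in> C" if XC: "(X, d) \<in> C" for X d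
      proof -
        have m: "metric_on X d" using XC assms unfolding MS_def by auto
        have "\<forall>a\<in>X. \<forall>b\<in>X. a = b" using N XC by blast
        have "d x y = 0" for x y
          using mo_refl[OF m] mo_out[OF m] \<open>\<forall>a\<in>X. \<forall>b\<in>X. a = b\<close> by metis
        then have "d = (\<lambda>x y. f (d x y))"
          unfolding f_def by (intro ext) simp
        then show ?thesis using XC by simp
      qed
      then show ?thesis unfolding P_cls_def FF_def f_def by auto
    qed
    moreover have "f \<notin> Am" unfolding Am_def f_def by (auto intro: exI[of _ 1])
    ultimately show False using P by simp
  qed
  have dis: "\<forall>X1 d1. (X1, d1) \<in> C \<longrightarrow> Dis_on X1 \<subseteq> C"
  proof (intro allI impI subsetI)
    fix X1 d1 q assume C1: "(X1, d1) \<in> C" and q: "q \<in> Dis_on X1"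
    then obtain d where qd: "q = (X1, d)" and dD: "(X1, d) \<in> Dis" unfolding Dis_on_def by auto
    then obtain k where k: "k > 0" "\<forall>x\<in>X1. \<forall>y\<in>X1. x \<noteq> y \<longrightarrow> d x y = k" and md: "metric_on X1 d"
      unfolding Dis_def by auto
    have m1: "metric_on X1 d1" using C1 assms unfolding MS_def by auto
    define f :: "real \<Rightarrow> real" where "f t = (if t \<le> 0 then 0 else k)" for t
    have fA: "f \<in> Am" using k unfolding Am_def FF_def f_def by auto
    have "(\<lambda>x y. f (d1 x y)) = d"
    proof (intro ext)
      fix x y
      show "f (d1 x y) = d x y"
      proof (cases "x \<in> X1 \<and> y \<in> X1 \<and> x \<noteq> y")
        case True
        then have "d1 x y > 0" using mo_pos[OF m1] by blast
        then show ?thesis using True k unfolding f_def by auto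
      next
        case False
        have "d1 x y = 0 \<and> d x y = 0"
        proof (cases "x \<in> X1 \<and> y \<in> X1")
          case True
          then have "x = y" using False by blast
          then show ?thesis using True mo_refl[OF m1] mo_refl[OF md] by simp
        next
          case False
          then show ?thesis using mo_out[OF m1] mo_out[OF md] by blast
        qed
        then show ?thesis unfolding f_def by auto
      qed
    qed
    then show "q \<in> C" using AmP[OF fA C1] qd by simp
  qed
  show "C \<subseteq> Dis \<and> (\<exists>Y \<rho>. (Y, \<rho>) \<in> C \<and> (\<exists>a\<in>Y. \<exists>b\<in>Y. a \<noteq> b))
           \<and> (\<forall>X1 d1. (X1, d1) \<in> C \<longrightarrow> Dis_on X1 \<subseteq> C)"
    using sub ex dis by blast
qed

end
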